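(* For every triple of partitions $\lambda=(\lambda^{(1)},\lambda^{(2)},\lambda^{(3)})\vdash_n d$ one has $k(\lambda)\le N(\lambda)$.
   Context: $\lambda\vdash_n d$ means each $\lambda^{(k)}$ is a partition of $d$ with at most $n$ nonzero parts. The Kronecker coefficient $k(\lambda)$ is the dimension of the space of $S_d$-invariants in $[\lambda^{(1)}]\otimes[\lambda^{(2)}]\otimes[\lambda^{(3)}]$, where $[\mu]$ is the irreducible (Specht) representation of the symmetric group $S_d$ indexed by $\mu$; equivalently it is the dimension of the space of highest weight vectors of weight $\lambda^*$ in $\mathrm{Sym}^d\bigotimes^3(\mathbb C^n)^*$. An obstruction design is a subset $\mathcal H\subseteq[\ell_1]\times[\ell_2]\times[\ell_3]$; its $k$-slices are the nonempty sets $\{x\in\mathcal H:x_k=i\}$, and its type is $(\lambda^{(1)},\lambda^{(2)},\lambda^{(3)})$ where $\lambda^{(k)}$ is the transpose of the partition obtained by sorting the $k$-slice sizes nonincreasingly. Let $\ell_k=\lambda^{(k)}_1$. $N(\lambda)$ is the number of orbits, under the natural action of $S_{\ell_1}\times S_{\ell_2}\times S_{\ell_3}$ permuting coordinates in each direction, of the set of obstruction designs $\mathcal H\subseteq[\ell_1]\times[\ell_2]\times[\ell_3]$ of type $\lambda$. *)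

theory Defs
  imports Complex_Main "HOL-Combinatorics.Permutations" "HOL-Library.Function_Algebras"
    "HOL-Library.Multiset"
begin

definition is_partition :: "nat \<Rightarrow> nat list \<Rightarrow> bool" where
  "is_partition d mu \<longleftrightarrow> sorted_wrt (\<ge>) mu \<and> (\<forall>x\<in>set mu. 0 < x) \<and> sum_list mu = d"

definition partition_le :: "nat \<Rightarrow> nat \<Rightarrow> nat list \<Rightarrow> bool" where
  "partition_le n d mu \<longleftrightarrow> is_partition d mu \<and> length mu \<le> n"

definition first_part :: "nat list \<Rightarrow> nat" where
  "first_part mu = (if mu = [] then 0 else hd mu)"

definition conj_part :: "nat list \<Rightarrow> nat list" where
  "conj_part mu = map (\<lambda>j. length (filter (\<lambda>x. j < x) mu)) [0..<first_part mu]"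

text \<open>Young diagram cells (row, column), 0-indexed.\<close>
definition cells :: "nat list \<Rightarrow> (nat \<times> nat) set" where
  "cells mu = {(i, j). i < length mu \<and> j < mu ! i}"

definition tableaux :: "nat \<Rightarrow> nat list \<Rightarrow> (nat \<times> nat \<Rightarrow> nat) set" where
  "tableaux d mu = {T. bij_betw T (cells mu) {0..<d}}"

text \<open>The tabloid {T}, encoded as the map sending each entry x < d to its row.\<close>
definition tabloid :: "nat \<Rightarrow> nat list \<Rightarrow> (nat \<times> nat \<Rightarrow> nat) \<Rightarrow> (nat \<Rightarrow> nat)" where
  "tabloid d mu T = (\<lambda>x. if x < d then fst (inv_into (cells mu) T x) else 0)"

definition col_group :: "nat \<Rightarrow> nat list \<Rightarrow> (nat \<times> nat \<Rightarrow> nat) \<Rightarrow> (nat \<Rightarrow> nat) set" where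
  "col_group d mu T = {p. p permutes {0..<d} \<and>
     (\<forall>x<d. snd (inv_into (cells mu) T (p x)) = snd (inv_into (cells mu) T x))}"

text \<open>Polytabloid e_T = sum over p in C_T of sign(p) {p T}, as an element of the
  permutation module M^mu (functions on tabloids).\<close>
definition polytabloid :: "nat \<Rightarrow> nat list \<Rightarrow> (nat \<times> nat \<Rightarrow> nat) \<Rightarrow> (nat \<Rightarrow> nat) \<Rightarrow> complex" where
  "polytabloid d mu T = (\<lambda>t. \<Sum>p\<in>col_group d mu T.
      of_int (sign p) * (if t = tabloid d mu (p \<circ> T) then 1 else 0))"

type_synonym tabtriple = "(nat \<Rightarrow> nat) \<times> (nat \<Rightarrow> nat) \<times> (nat \<Rightarrow> nat)"

definition fscale :: "complex \<Rightarrow> (tabtriple \<Rightarrow> complex) \<Rightarrow> (tabtriple \<Rightarrow> complex)" where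
  "fscale c f = (\<lambda>x. c * f x)"

text \<open>[mu1] (x) [mu2] (x) [mu3], realised inside M^mu1 (x) M^mu2 (x) M^mu3 = functions on
  triples of tabloids, as the span of the products of polytabloids.\<close>
definition specht_triple :: "nat \<Rightarrow> nat list \<Rightarrow> nat list \<Rightarrow> nat list \<Rightarrow> (tabtriple \<Rightarrow> complex) set" where
  "specht_triple d mu1 mu2 mu3 = module.span fscale
     {(\<lambda>(t1, t2, t3). polytabloid d mu1 T1 t1 * polytabloid d mu2 T2 t2 * polytabloid d mu3 T3 t3)
       | T1 T2 T3. T1 \<in> tableaux d mu1 \<and> T2 \<in> tableaux d mu2 \<and> T3 \<in> tableaux d mu3}"

text \<open>Diagonal S_d action: (s . F)(t1,t2,t3) = F(s^-1 . t1, ...), where (s . t)(x) = t(s^-1 x).\<close>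
definition perm_act :: "(nat \<Rightarrow> nat) \<Rightarrow> (tabtriple \<Rightarrow> complex) \<Rightarrow> (tabtriple \<Rightarrow> complex)" where
  "perm_act s F = (\<lambda>(t1, t2, t3). F (t1 \<circ> s, t2 \<circ> s, t3 \<circ> s))"

definition invariants :: "nat \<Rightarrow> nat list \<Rightarrow> nat list \<Rightarrow> nat list \<Rightarrow> (tabtriple \<Rightarrow> complex) set" where
  "invariants d mu1 mu2 mu3 = {F \<in> specht_triple d mu1 mu2 mu3.
      \<forall>s. s permutes {0..<d} \<longrightarrow> perm_act s F = F}"

definition kronecker :: "nat list \<Rightarrow> nat list \<Rightarrow> nat list \<Rightarrow> nat" where
  "kronecker mu1 mu2 mu3 = vector_space.dim fscale (invariants (sum_list mu1) mu1 mu2 mu3)"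

type_synonym point = "nat \<times> nat \<times> nat"

definition coord :: "nat \<Rightarrow> point \<Rightarrow> nat" where
  "coord k x = (if k = 1 then fst x else if k = 2 then fst (snd x) else snd (snd x))"

definition slice :: "nat \<Rightarrow> point set \<Rightarrow> nat \<Rightarrow> point set" where
  "slice k H i = {x \<in> H. coord k x = i}"

definition slice_sizes :: "nat \<Rightarrow> nat \<Rightarrow> point set \<Rightarrow> nat list" where
  "slice_sizes k l H = rev (sorted_list_of_multiset
      (image_mset (\<lambda>i. card (slice k H i)) (mset_set {i \<in> {0..<l}. slice k H i \<noteq> {}})))"

definition box :: "nat \<Rightarrow> nat \<Rightarrow> nat \<Rightarrow> point set" where
  "box l1 l2 l3 = {0..<l1} \<times> {0..<l2} \<times> {0..<l3}"

definition designs :: "nat list \<Rightarrow> nat list \<Rightarrow> nat list \<Rightarrow> point set set" where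
  "designs mu1 mu2 mu3 = {H. H \<subseteq> box (first_part mu1) (first_part mu2) (first_part mu3) \<and>
      conj_part (slice_sizes 1 (first_part mu1) H) = mu1 \<and>
      conj_part (slice_sizes 2 (first_part mu2) H) = mu2 \<and>
      conj_part (slice_sizes 3 (first_part mu3) H) = mu3}"

definition design_orbit :: "nat \<Rightarrow> nat \<Rightarrow> nat \<Rightarrow> point set \<Rightarrow> point set set" where
  "design_orbit l1 l2 l3 H = {(\<lambda>(a, b, c). (p1 a, p2 b, p3 c)) ` H | p1 p2 p3.
      p1 permutes {0..<l1} \<and> p2 permutes {0..<l2} \<and> p3 permutes {0..<l3}}"

definition num_designs :: "nat list \<Rightarrow> nat list \<Rightarrow> nat list \<Rightarrow> nat" where
  "num_designs mu1 mu2 mu3 = card (design_orbit (first_part mu1) (first_part mu2) (first_part mu3)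
      ` designs mu1 mu2 mu3)"

end

theory Submission
  imports Defs
begin

lemma vs_fscale: "vector_space fscale"
  by unfold_locales (auto simp: fscale_def algebra_simps)

interpretation V: vector_space fscale by (rule vs_fscale)

section \<open>Abstract polytabloids\<close>

definition CG :: "nat \<Rightarrow> (nat \<Rightarrow> nat) \<Rightarrow> (nat \<Rightarrow> nat) set" where
  "CG d c = {p. p permutes {0..<d} \<and> (\<forall>x<d. c (p x) = c x)}"

definition Lam :: "nat \<Rightarrow> (nat \<Rightarrow> nat) \<Rightarrow> (nat \<Rightarrow> nat) \<Rightarrow> (nat \<Rightarrow> nat)" where
  "Lam d r p = (\<lambda>x. if x < d then r (inv p x) else 0)"

definition PT :: "nat \<Rightarrow> (nat \<Rightarrow> nat) \<Rightarrow> (nat \<Rightarrow> nat) \<Rightarrow> (nat \<Rightarrow> nat) \<Rightarrow> complex" where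
  "PT d r c t = (\<Sum>p\<in>CG d c. of_int (sign p) * (if t = Lam d r p then 1 else 0))"

lemma finite_CG: "finite (CG d c)"
  by (rule finite_subset[OF _ finite_permutations[of "{0..<d}"]]) (auto simp: CG_def)

lemma perm_of_permutes: "p permutes {0..<(d::nat)} \<Longrightarrow> permutation p"
  unfolding permutation_permutes by (rule exI[of _ "{0..<d}"]) simp

lemma inv_in: "p permutes {0..<(d::nat)} \<Longrightarrow> x < d \<Longrightarrow> inv p x < d"
  using permutes_in_image[OF permutes_inv, of p "{0..<d}" x] by auto

lemma p_in: "p permutes {0..<(d::nat)} \<Longrightarrow> x < d \<Longrightarrow> p x < d"
  using permutes_in_image[of p "{0..<d}" x] by auto

lemma CG_comp: "p \<in> CG d c \<Longrightarrow> q \<in> CG d c \<Longrightarrow> p \<circ> q \<in> CG d c"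
  unfolding CG_def
proof (clarsimp, intro conjI allI impI)
  fix x assume p: "p permutes {0..<d}" and hp: "\<forall>x<d. c (p x) = c x"
    and q: "q permutes {0..<d}" and hq: "\<forall>x<d. c (q x) = c x"
  show "p \<circ> q permutes {0..<d}" using q p by (rule permutes_compose)
  assume "x < d"
  hence "q x < d" using p_in[OF q] by blast
  hence "c (p (q x)) = c (q x)" using hp by blast
  also have "\<dots> = c x" using hq \<open>x < d\<close> by blast
  finally show "c (p (q x)) = c x" .
qed

lemma CG_inv: "p \<in> CG d c \<Longrightarrow> inv p \<in> CG d c"
  unfolding CG_def
proof (clarsimp, intro conjI allI impI)
  fix x assume p: "p permutes {0..<d}" and h: "\<forall>x<d. c (p x) = c x"
  show "inv p permutes {0..<d}" using p by (rule permutes_inv)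
  assume x: "x < d"
  have "c (p (inv p x)) = c (inv p x)" using h inv_in[OF p x] by blast
  thus "c (inv p x) = c x" using p by (simp add: permutes_inverses(1))
qed

lemma sign_pm: "p permutes {0..<d} \<Longrightarrow> sign p = 1 \<or> sign p = -1"
  by (simp add: sign_def)

lemma PT_transport:
  assumes g: "g permutes {0..<d}"
    and gc: "\<forall>x<d. c (g x) = c x"
    and gr: "\<forall>x<d. r' (g x) = r x"
    and cc: "\<forall>x<d. \<forall>y<d. c' x = c' y \<longleftrightarrow> c x = c y"
  shows "PT d r c t = of_int (sign g) * PT d r' c' t"
proof -
  have CGeq: "CG d c' = CG d c"
    unfolding CG_def using cc p_in by blast
  have gCG: "g \<in> CG d c" using g gc by (simp add: CG_def)
  have igCG: "inv g \<in> CG d c" by (rule CG_inv[OF gCG])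
  have bij: "bij_betw (\<lambda>p. p \<circ> inv g) (CG d c) (CG d c)"
  proof (rule bij_betw_byWitness[where f' = "\<lambda>q. q \<circ> g"])
    show "\<forall>a\<in>CG d c. a \<circ> inv g \<circ> g = a"
      using g by (simp add: o_assoc[symmetric] permutes_inv_o(2))
    show "\<forall>a\<in>CG d c. a \<circ> g \<circ> inv g = a"
      using g by (simp add: o_assoc[symmetric] permutes_inv_o(1))
    show "(\<lambda>p. p \<circ> inv g) ` CG d c \<subseteq> CG d c" using CG_comp igCG by blast
    show "(\<lambda>q. q \<circ> g) ` CG d c \<subseteq> CG d c" using CG_comp gCG by blast
  qed
  have "PT d r' c' t = (\<Sum>q\<in>CG d c. of_int (sign q) * (if t = Lam d r' q then 1 else 0))"
    by (simp add: PT_def CGeq)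
  also have "\<dots> = (\<Sum>p\<in>CG d c. of_int (sign (p \<circ> inv g)) * (if t = Lam d r' (p \<circ> inv g) then 1 else 0))"
    using sum.reindex_bij_betw[OF bij, symmetric] by simp
  also have "\<dots> = (\<Sum>p\<in>CG d c. of_int (sign g) * (of_int (sign p) * (if t = Lam d r p then 1 else 0)))"
  proof (rule sum.cong[OF refl])
    fix p assume pC: "p \<in> CG d c"
    hence p: "p permutes {0..<d}" by (simp add: CG_def)
    have s: "sign (p \<circ> inv g) = sign p * sign g"
      using sign_compose[OF perm_of_permutes[OF p] perm_of_permutes[OF permutes_inv[OF g]]]
        sign_inverse[OF perm_of_permutes[OF g]] by simp
    have iv: "inv (p \<circ> inv g) = g \<circ> inv p"
      using o_inv_distrib[OF permutes_bij[OF p] bij_imp_bij_inv[OF permutes_bij[OF g]]]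
        inv_inv_eq[OF permutes_bij[OF g]] by simp
    have L: "Lam d r' (p \<circ> inv g) = Lam d r p"
      unfolding Lam_def iv using gr inv_in[OF p] by (auto simp: fun_eq_iff)
    show "of_int (sign (p \<circ> inv g)) * (if t = Lam d r' (p \<circ> inv g) then 1 else 0) =
      of_int (sign g) * (of_int (sign p) * (if t = Lam d r p then 1 else 0))"
      by (simp add: s L mult.commute)
  qed
  also have "\<dots> = of_int (sign g) * PT d r c t"
    by (simp add: PT_def sum_distrib_left)
  finally have "PT d r' c' t = of_int (sign g) * PT d r c t" .
  moreover have "of_int (sign g) * of_int (sign g) = (1::complex)"
    using sign_pm[OF g] by auto
  ultimately show ?thesis by (metis mult.assoc mult_1)
qed

lemma PT_relabel:
  assumes s: "s permutes {0..<d}"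
  shows "PT d r c (t \<circ> s) = PT d (r \<circ> inv s) (c \<circ> inv s) t"
proof -
  have is': "inv s permutes {0..<d}" using s by (rule permutes_inv)
  have bij: "bij_betw (\<lambda>p. s \<circ> p \<circ> inv s) (CG d c) (CG d (c \<circ> inv s))"
  proof (rule bij_betw_byWitness[where f' = "\<lambda>q. inv s \<circ> q \<circ> s"])
    show "\<forall>a\<in>CG d c. inv s \<circ> (s \<circ> a \<circ> inv s) \<circ> s = a"
      using s by (auto simp: fun_eq_iff permutes_inverses)
    show "\<forall>a\<in>CG d (c \<circ> inv s). s \<circ> (inv s \<circ> a \<circ> s) \<circ> inv s = a"
      using s by (auto simp: fun_eq_iff permutes_inverses)
    show "(\<lambda>p. s \<circ> p \<circ> inv s) ` CG d c \<subseteq> CG d (c \<circ> inv s)"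
    proof clarify
      fix p assume "p \<in> CG d c"
      hence p: "p permutes {0..<d}" and hp: "\<forall>x<d. c (p x) = c x" by (auto simp: CG_def)
      have "s \<circ> p \<circ> inv s permutes {0..<d}"
        by (rule permutes_compose[OF is' permutes_compose[OF p s]])
      moreover have "\<forall>x<d. c (inv s (s (p (inv s x)))) = c (inv s x)"
        using hp inv_in[OF s] s by (simp add: permutes_inverses)
      ultimately show "s \<circ> p \<circ> inv s \<in> CG d (c \<circ> inv s)" by (simp add: CG_def)
    qed
    show "(\<lambda>q. inv s \<circ> q \<circ> s) ` CG d (c \<circ> inv s) \<subseteq> CG d c"
    proof clarify
      fix q assume "q \<in> CG d (c \<circ> inv s)"
      hence q: "q permutes {0..<d}" and hq: "\<forall>x<d. c (inv s (q x)) = c (inv s x)" by (auto simp: CG_def)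
      have "inv s \<circ> q \<circ> s permutes {0..<d}"
        by (rule permutes_compose[OF s permutes_compose[OF q is']])
      moreover have "\<forall>x<d. c (inv s (q (s x))) = c x"
        using hq p_in[OF s] s by (simp add: permutes_inverses)
      ultimately show "inv s \<circ> q \<circ> s \<in> CG d c" by (simp add: CG_def)
    qed
  qed
  have "PT d (r \<circ> inv s) (c \<circ> inv s) t =
    (\<Sum>q\<in>CG d (c \<circ> inv s). of_int (sign q) * (if t = Lam d (r \<circ> inv s) q then 1 else 0))"
    by (simp add: PT_def)
  also have "\<dots> = (\<Sum>p\<in>CG d c. of_int (sign (s \<circ> p \<circ> inv s)) *
       (if t = Lam d (r \<circ> inv s) (s \<circ> p \<circ> inv s) then 1 else 0))"
    using sum.reindex_bij_betw[OF bij, symmetric] by simp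
  also have "\<dots> = (\<Sum>p\<in>CG d c. of_int (sign p) * (if t \<circ> s = Lam d r p then 1 else 0))"
  proof (rule sum.cong[OF refl])
    fix p assume "p \<in> CG d c"
    hence p: "p permutes {0..<d}" by (simp add: CG_def)
    have sg1: "sign (s \<circ> p \<circ> inv s) = sign (s \<circ> p) * sign (inv s)"
      by (rule sign_compose[OF perm_of_permutes[OF permutes_compose[OF p s]] perm_of_permutes[OF is']])
    have sg2: "sign (s \<circ> p) = sign s * sign p"
      by (rule sign_compose[OF perm_of_permutes[OF s] perm_of_permutes[OF p]])
    have sg3: "sign (inv s) = sign s" by (rule sign_inverse[OF perm_of_permutes[OF s]])
    have sg: "sign (s \<circ> p \<circ> inv s) = sign p"
      unfolding sg1 sg2 sg3 using sign_pm[OF s] by auto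
    have iv: "inv (s \<circ> p \<circ> inv s) = s \<circ> inv p \<circ> inv s"
    proof -
      have "inv (s \<circ> p \<circ> inv s) = inv (inv s) \<circ> inv (s \<circ> p)"
        by (rule o_inv_distrib[OF bij_comp[OF permutes_bij[OF p] permutes_bij[OF s]] permutes_bij[OF is']])
      also have "\<dots> = s \<circ> (inv p \<circ> inv s)"
        using o_inv_distrib[OF permutes_bij[OF s] permutes_bij[OF p]] inv_inv_eq[OF permutes_bij[OF s]] by simp
      finally show ?thesis by (simp add: o_assoc)
    qed
    have L: "Lam d (r \<circ> inv s) (s \<circ> p \<circ> inv s) = Lam d r p \<circ> inv s"
      unfolding Lam_def iv using s inv_in[OF s]
      by (auto simp: fun_eq_iff permutes_inverses) (metis inv_in p_in permutes_inverses(1))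
    have E: "(t = Lam d r p \<circ> inv s) \<longleftrightarrow> (t \<circ> s = Lam d r p)"
    proof
      assume "t = Lam d r p \<circ> inv s" thus "t \<circ> s = Lam d r p"
        using s by (auto simp: fun_eq_iff permutes_inverses)
    next
      assume "t \<circ> s = Lam d r p"
      hence "t \<circ> s \<circ> inv s = Lam d r p \<circ> inv s" by simp
      thus "t = Lam d r p \<circ> inv s" using s by (simp add: o_assoc[symmetric] permutes_inv_o)
    qed
    show "of_int (sign (s \<circ> p \<circ> inv s)) * (if t = Lam d (r \<circ> inv s) (s \<circ> p \<circ> inv s) then 1 else 0)
      = of_int (sign p) * (if t \<circ> s = Lam d r p then (1::complex) else 0)"
      by (simp add: sg L E)
  qed
  also have "\<dots> = PT d r c (t \<circ> s)" by (simp add: PT_def)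
  finally show ?thesis by simp
qed

section \<open>Tableaux\<close>

definition pos :: "nat list \<Rightarrow> (nat \<times> nat \<Rightarrow> nat) \<Rightarrow> nat \<Rightarrow> nat \<times> nat" where
  "pos mu T x = inv_into (cells mu) T x"

definition r_of where "r_of mu T = (\<lambda>x. fst (pos mu T x))"
definition c_of where "c_of mu T = (\<lambda>x. snd (pos mu T x))"

lemma tab_pos:
  assumes "T \<in> tableaux d mu" "x < d"
  shows "pos mu T x \<in> cells mu" "T (pos mu T x) = x"
proof -
  have b: "bij_betw T (cells mu) {0..<d}" using assms by (simp add: tableaux_def)
  have "x \<in> T ` cells mu" using bij_betw_imp_surj_on[OF b] assms by auto
  thus "pos mu T x \<in> cells mu" "T (pos mu T x) = x"
    by (auto simp: pos_def inv_into_into f_inv_into_f)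
qed

lemma tab_val: "T \<in> tableaux d mu \<Longrightarrow> z \<in> cells mu \<Longrightarrow> T z < d"
  by (auto simp: tableaux_def bij_betw_def)

lemma tab_inj: "T \<in> tableaux d mu \<Longrightarrow> inj_on T (cells mu)"
  by (auto simp: tableaux_def bij_betw_def)

lemma tab_pos2: "T \<in> tableaux d mu \<Longrightarrow> z \<in> cells mu \<Longrightarrow> pos mu T (T z) = z"
  by (simp add: pos_def inv_into_f_f tab_inj)

lemma pos_comp:
  assumes T: "T \<in> tableaux d mu" and p: "p permutes {0..<d}" and x: "x < d"
  shows "inv_into (cells mu) (p \<circ> T) x = pos mu T (inv p x)"
proof (rule inv_into_f_eq)
  show "inj_on (p \<circ> T) (cells mu)"
    using tab_inj[OF T] permutes_inj[OF p] by (simp add: comp_inj_on inj_on_subset)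
  show "pos mu T (inv p x) \<in> cells mu" using tab_pos[OF T inv_in[OF p x]] by simp
  show "(p \<circ> T) (pos mu T (inv p x)) = x"
    using tab_pos[OF T inv_in[OF p x]] p by (simp add: permutes_inverses)
qed

lemma poly_PT:
  assumes T: "T \<in> tableaux d mu"
  shows "polytabloid d mu T = PT d (r_of mu T) (c_of mu T)"
proof -
  have CGe: "col_group d mu T = CG d (c_of mu T)"
    by (simp add: col_group_def CG_def c_of_def pos_def)
  have "\<And>p. p \<in> CG d (c_of mu T) \<Longrightarrow> tabloid d mu (p \<circ> T) = Lam d (r_of mu T) p"
    using pos_comp[OF T] by (auto simp: tabloid_def Lam_def r_of_def CG_def fun_eq_iff)
  thus ?thesis unfolding polytabloid_def PT_def CGe fun_eq_iff by simp
qed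


section \<open>Partition combinatorics\<close>

definition colen :: "nat list \<Rightarrow> nat \<Rightarrow> nat" where
  "colen mu j = length (filter (\<lambda>x. j < x) mu)"

lemma KL: "sorted_wrt (\<ge>) mu \<Longrightarrow> (i < colen mu j \<longleftrightarrow> i < length mu \<and> j < mu ! i)"
proof (induction mu arbitrary: i)
  case Nil thus ?case by (simp add: colen_def)
next
  case (Cons a mu)
  hence IH: "\<And>i. i < colen mu j \<longleftrightarrow> i < length mu \<and> j < mu ! i"
    and ge: "\<forall>y\<in>set mu. y \<le> a" by auto
  show ?case
  proof (cases "j < a")
    case True
    thus ?thesis using IH by (cases i) (auto simp: colen_def)
  next
    case False
    hence "filter (\<lambda>x. j < x) mu = []" using ge by (auto simp: filter_empty_conv)
    moreover have "i < length (a # mu) \<Longrightarrow> \<not> j < (a # mu) ! i"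
      using False ge by (cases i) (auto, meson nth_mem order.trans not_le)
    ultimately show ?thesis using False by (auto simp: colen_def)
  qed
qed

lemma cells_iff: "sorted_wrt (\<ge>) mu \<Longrightarrow> (i, j) \<in> cells mu \<longleftrightarrow> i < colen mu j"
  using KL by (simp add: cells_def)

lemma colen_mono: "i \<le> j \<Longrightarrow> colen mu j \<le> colen mu i"
proof -
  assume "i \<le> j"
  hence "filter (\<lambda>x. j < x) mu = filter (\<lambda>x. j < x) (filter (\<lambda>x. i < x) mu)"
    by (simp add: filter_filter) (metis (lifting) le_less_trans)
  thus ?thesis unfolding colen_def by (metis length_filter_le)
qed

lemma first_part_nth: "mu \<noteq> [] \<Longrightarrow> first_part mu = mu ! 0"
  by (simp add: first_part_def hd_conv_nth)

lemma nth_le_first: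
  assumes s: "sorted_wrt (\<ge>) mu" and i: "i < length mu"
  shows "mu ! i \<le> first_part mu"
proof -
  have ne: "mu \<noteq> []" using i by auto
  have "\<forall>i j. i < j \<longrightarrow> j < length mu \<longrightarrow> mu ! j \<le> mu ! i"
    using s by (simp add: sorted_wrt_iff_nth_less)
  thus ?thesis using i by (cases i) (auto simp: first_part_nth[OF ne])
qed

lemma conj_part_colen: "conj_part mu = map (colen mu) [0..<first_part mu]"
  by (simp add: conj_part_def colen_def)

lemma conj_sorted: "sorted (rev (conj_part mu))"
  unfolding conj_part_colen sorted_rev_iff_nth_mono by (auto intro: colen_mono)

lemma conj_conj:
  assumes "is_partition d mu"
  shows "conj_part (conj_part mu) = mu"
proof (cases "mu = []")
  case True thus ?thesis by (simp add: conj_part_def first_part_def)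
next
  case False
  have srt: "sorted_wrt (\<ge>) mu" and pos: "\<forall>x\<in>set mu. 0 < x" using assms by (auto simp: is_partition_def)
  define l where "l = first_part mu"
  have l0: "0 < l" using False pos by (simp add: l_def first_part_def)
  have c0: "colen mu 0 = length mu" using pos by (simp add: colen_def)
  have cpl: "conj_part mu = map (colen mu) [0..<l]" by (simp add: conj_part_colen l_def)
  have fp: "first_part (conj_part mu) = length mu"
  proof -
    have ne: "conj_part mu \<noteq> []" using l0 cpl by simp
    have "first_part (conj_part mu) = conj_part mu ! 0" by (rule first_part_nth[OF ne])
    also have "\<dots> = colen mu 0" using l0 cpl by simp
    finally show ?thesis using c0 by simp
  qed
  show ?thesis
  proof (rule nth_equalityI)
    have cc: "conj_part (conj_part mu) = map (colen (conj_part mu)) [0..<length mu]"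
      unfolding conj_part_colen[of "conj_part mu"] fp ..
    show "length (conj_part (conj_part mu)) = length mu" unfolding cc by simp
    fix i assume "i < length (conj_part (conj_part mu))"
    hence i: "i < length mu" unfolding cc by simp
    have "conj_part (conj_part mu) ! i = colen (map (colen mu) [0..<l]) i"
      unfolding cc cpl[symmetric] using i by simp
    also have "\<dots> = length (filter (\<lambda>k. i < colen mu k) [0..<l])"
      by (simp add: colen_def filter_map o_def)
    also have "\<dots> = card {k. k < l \<and> i < colen mu k}"
      unfolding length_filter_conv_card by (intro arg_cong[where f = card]) auto
    also have "{k. k < l \<and> i < colen mu k} = {0..<mu ! i}"
      using KL[OF srt] i nth_le_first[OF srt i] by (auto simp: l_def)
    finally show "conj_part (conj_part mu) ! i = mu ! i" by simp
  qed
qed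

lemma col_lt_first:
  assumes T: "T \<in> tableaux d mu" and srt: "sorted_wrt (\<ge>) mu" and x: "x < d"
  shows "c_of mu T x < first_part mu"
proof -
  have "pos mu T x \<in> cells mu" by (rule tab_pos[OF T x])
  thus ?thesis using nth_le_first[OF srt] by (cases "pos mu T x") (force simp: cells_def c_of_def)
qed

lemma col_set:
  assumes T: "T \<in> tableaux d mu"
  shows "{x. x < d \<and> c_of mu T x = j} = T ` {z \<in> cells mu. snd z = j}"
proof (rule equalityI)
  show "{x. x < d \<and> c_of mu T x = j} \<subseteq> T ` {z \<in> cells mu. snd z = j}"
  proof (rule subsetI)
    fix x assume "x \<in> {x. x < d \<and> c_of mu T x = j}"
    hence x: "x < d" and cx: "c_of mu T x = j" by auto
    have pc: "pos mu T x \<in> cells mu" and Tp: "T (pos mu T x) = x" using tab_pos[OF T x] by auto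
    have "pos mu T x \<in> {z \<in> cells mu. snd z = j}" using pc cx by (simp add: c_of_def)
    thus "x \<in> T ` {z \<in> cells mu. snd z = j}" using Tp by (metis image_eqI)
  qed
  show "T ` {z \<in> cells mu. snd z = j} \<subseteq> {x. x < d \<and> c_of mu T x = j}"
  proof (rule subsetI)
    fix y assume "y \<in> T ` {z \<in> cells mu. snd z = j}"
    then obtain z where z: "z \<in> cells mu" and zj: "snd z = j" and y: "y = T z" by blast
    have "y < d" using tab_val[OF T z] y by simp
    moreover have "c_of mu T y = j" using tab_pos2[OF T z] zj y by (simp add: c_of_def)
    ultimately show "y \<in> {x. x < d \<and> c_of mu T x = j}" by simp
  qed
qed

lemma col_card:
  assumes T: "T \<in> tableaux d mu" and srt: "sorted_wrt (\<ge>) mu"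
  shows "card {x. x < d \<and> c_of mu T x = j} = colen mu j"
proof -
  have "card {x. x < d \<and> c_of mu T x = j} = card {z \<in> cells mu. snd z = j}"
    unfolding col_set[OF T] by (rule card_image[OF inj_on_subset[OF tab_inj[OF T]]]) blast
  also have "{z \<in> cells mu. snd z = j} = (\<lambda>i. (i, j)) ` {0..<colen mu j}"
  proof (rule set_eqI)
    fix z show "z \<in> {z \<in> cells mu. snd z = j} \<longleftrightarrow> z \<in> (\<lambda>i. (i, j)) ` {0..<colen mu j}"
      using cells_iff[OF srt, of "fst z" "snd z"] by (cases z) auto
  qed
  also have "card \<dots> = colen mu j" by (simp add: card_image inj_on_def)
  finally show ?thesis .
qed

section \<open>Designs from tableaux\<close>

lemma slice_sizes_tab:
  assumes T: "T \<in> tableaux d mu" and P: "is_partition d mu"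
    and hinj: "inj_on h {0..<d}" and hc: "\<And>x. x < d \<Longrightarrow> coord k (h x) = c_of mu T x"
  shows "slice_sizes k (first_part mu) (h ` {0..<d}) = conj_part mu"
proof -
  have srt: "sorted_wrt (\<ge>) mu" using P by (simp add: is_partition_def)
  define l where "l = first_part mu"
  have sl: "slice k (h ` {0..<d}) j = h ` {x. x < d \<and> c_of mu T x = j}" for j
    using hc by (auto simp: slice_def)
  have cs: "card (slice k (h ` {0..<d}) j) = colen mu j" for j
    unfolding sl col_card[OF T srt, symmetric]
    by (rule card_image) (rule inj_on_subset[OF hinj], auto)
  have ne: "slice k (h ` {0..<d}) j \<noteq> {}" if "j < l" for j
  proof -
    have "mu \<noteq> []" using that by (auto simp: l_def first_part_def)
    hence "0 < colen mu j" using KL[OF srt, of 0 j] that by (simp add: l_def first_part_nth)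
    thus ?thesis using cs[of j] by auto
  qed
  have S: "{i \<in> {0..<l}. slice k (h ` {0..<d}) i \<noteq> {}} = {0..<l}" using ne by auto
  have "image_mset (\<lambda>i. card (slice k (h ` {0..<d}) i)) (mset_set {0..<l}) = mset (conj_part mu)"
    unfolding mset_upt[symmetric] conj_part_colen l_def[symmetric] mset_map[symmetric] cs ..
  hence "slice_sizes k l (h ` {0..<d}) = rev (sort (conj_part mu))"
    unfolding slice_sizes_def S by simp
  also have "sort (conj_part mu) = rev (conj_part mu)"
    by (rule properties_for_sort) (simp_all add: conj_sorted)
  finally show ?thesis by (simp add: l_def)
qed

definition h3 :: "nat list \<Rightarrow> nat list \<Rightarrow> nat list \<Rightarrow> (nat \<times> nat \<Rightarrow> nat) \<Rightarrow> (nat \<times> nat \<Rightarrow> nat) \<Rightarrow> (nat \<times> nat \<Rightarrow> nat) \<Rightarrow> nat \<Rightarrow> point" where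
  "h3 mu1 mu2 mu3 T1 T2 T3 = (\<lambda>x. (c_of mu1 T1 x, c_of mu2 T2 x, c_of mu3 T3 x))"

lemma H_design:
  assumes P1: "is_partition d mu1" and P2: "is_partition d mu2" and P3: "is_partition d mu3"
    and T1: "T1 \<in> tableaux d mu1" and T2: "T2 \<in> tableaux d mu2" and T3: "T3 \<in> tableaux d mu3"
    and inj: "inj_on (h3 mu1 mu2 mu3 T1 T2 T3) {0..<d}"
  shows "h3 mu1 mu2 mu3 T1 T2 T3 ` {0..<d} \<in> designs mu1 mu2 mu3"
proof -
  have s1: "sorted_wrt (\<ge>) mu1" and s2: "sorted_wrt (\<ge>) mu2" and s3: "sorted_wrt (\<ge>) mu3"
    using P1 P2 P3 by (auto simp: is_partition_def)
  have box: "h3 mu1 mu2 mu3 T1 T2 T3 ` {0..<d} \<subseteq> box (first_part mu1) (first_part mu2) (first_part mu3)"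
    using col_lt_first[OF T1 s1] col_lt_first[OF T2 s2] col_lt_first[OF T3 s3]
    by (auto simp: box_def h3_def)
  have "slice_sizes 1 (first_part mu1) (h3 mu1 mu2 mu3 T1 T2 T3 ` {0..<d}) = conj_part mu1"
    by (rule slice_sizes_tab[OF T1 P1 inj]) (simp add: coord_def h3_def)
  moreover have "slice_sizes 2 (first_part mu2) (h3 mu1 mu2 mu3 T1 T2 T3 ` {0..<d}) = conj_part mu2"
    by (rule slice_sizes_tab[OF T2 P2 inj]) (simp add: coord_def h3_def)
  moreover have "slice_sizes 3 (first_part mu3) (h3 mu1 mu2 mu3 T1 T2 T3 ` {0..<d}) = conj_part mu3"
    by (rule slice_sizes_tab[OF T3 P3 inj]) (simp add: coord_def h3_def)
  ultimately show ?thesis using box conj_conj[OF P1] conj_conj[OF P2] conj_conj[OF P3]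
    by (simp add: designs_def)
qed

section \<open>Reynolds operator\<close>

definition Pt :: "nat \<Rightarrow> nat list \<Rightarrow> nat list \<Rightarrow> nat list \<Rightarrow> (nat \<times> nat \<Rightarrow> nat) \<Rightarrow> (nat \<times> nat \<Rightarrow> nat) \<Rightarrow> (nat \<times> nat \<Rightarrow> nat) \<Rightarrow> tabtriple \<Rightarrow> complex" where
  "Pt d mu1 mu2 mu3 T1 T2 T3 = (\<lambda>(t1, t2, t3). polytabloid d mu1 T1 t1 * polytabloid d mu2 T2 t2 * polytabloid d mu3 T3 t3)"

definition Rey :: "nat \<Rightarrow> (tabtriple \<Rightarrow> complex) \<Rightarrow> (tabtriple \<Rightarrow> complex)" where
  "Rey d F = (\<lambda>t. \<Sum>s\<in>{s. s permutes {0..<d}}. perm_act s F t)"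

lemma perm_act_comp: "perm_act s (perm_act g F) = perm_act (s \<circ> g) F"
  by (auto simp: perm_act_def fun_eq_iff o_assoc)

lemma Rey_act:
  assumes g: "g permutes {0..<d}"
  shows "Rey d (perm_act g F) = Rey d F"
proof -
  have bij: "bij_betw (\<lambda>s. s \<circ> g) {s. s permutes {0..<d}} {s. s permutes {0..<d}}"
  proof (rule bij_betw_byWitness[where f' = "\<lambda>s. s \<circ> inv g"])
    show "\<forall>a\<in>{s. s permutes {0..<d}}. a \<circ> g \<circ> inv g = a"
      using g by (simp add: o_assoc[symmetric] permutes_inv_o(1))
    show "\<forall>a\<in>{s. s permutes {0..<d}}. a \<circ> inv g \<circ> g = a"
      using g by (simp add: o_assoc[symmetric] permutes_inv_o(2))
    show "(\<lambda>s. s \<circ> g) ` {s. s permutes {0..<d}} \<subseteq> {s. s permutes {0..<d}}"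
      using g by (auto intro: permutes_compose)
    show "(\<lambda>s. s \<circ> inv g) ` {s. s permutes {0..<d}} \<subseteq> {s. s permutes {0..<d}}"
      using permutes_inv[OF g] by (auto intro: permutes_compose)
  qed
  show ?thesis unfolding Rey_def perm_act_comp
  proof (rule ext)
    fix t
    show "(\<Sum>s\<in>{s. s permutes {0..<d}}. perm_act (s \<circ> g) F t) = (\<Sum>s\<in>{s. s permutes {0..<d}}. perm_act s F t)"
      using sum.reindex_bij_betw[OF bij, of "\<lambda>s. perm_act s F t"] by simp
  qed
qed

lemma Rey_scale: "Rey d (fscale e F) = fscale e (Rey d F)"
  by (simp add: Rey_def fscale_def perm_act_def sum_distrib_left fun_eq_iff split_beta)

lemma Rey_zero: "Rey d 0 = 0"
proof (rule ext)
  fix t :: tabtriple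
  obtain t1 t2 t3 where t: "t = (t1, t2, t3)" by (cases t) auto
  show "Rey d 0 t = 0 t" unfolding t Rey_def perm_act_def by simp
qed

lemma Rey_add: "Rey d (F + G) = Rey d F + Rey d G"
proof (rule ext)
  fix t :: tabtriple
  obtain t1 t2 t3 where t: "t = (t1, t2, t3)" by (cases t) auto
  show "Rey d (F + G) t = (Rey d F + Rey d G) t" unfolding t Rey_def perm_act_def by (simp add: sum.distrib)
qed

lemma one_k:
  assumes T: "T \<in> tableaux d mu" and T': "T' \<in> tableaux d mu" and srt: "sorted_wrt (\<ge>) mu"
    and s: "s permutes {0..<d}" and pm: "pm permutes {0..<first_part mu}"
    and hc: "\<forall>x<d. c_of mu T' (s x) = pm (c_of mu T x)"
  shows "\<exists>g. g permutes {0..<d} \<and> (\<forall>t. PT d (r_of mu T \<circ> inv s) (c_of mu T \<circ> inv s) t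
            = of_int (sign g) * PT d (r_of mu T') (c_of mu T') t)"
proof -
  define r where "r = r_of mu T \<circ> inv s"
  define c where "c = c_of mu T \<circ> inv s"
  define l where "l = first_part mu"
  have pminj: "inj pm" using pm by (rule permutes_inj)
  have c': "c_of mu T' z = pm (c z)" if "z < d" for z
  proof -
    have "c_of mu T' (s (inv s z)) = pm (c_of mu T (inv s z))" using hc inv_in[OF s that] by blast
    thus ?thesis using permutes_inverses(1)[OF s] by (simp add: c_def)
  qed
  have cl: "c z < l" if "z < d" for z
    unfolding c_def l_def using col_lt_first[OF T srt inv_in[OF s that]] by simp
  have colpres: "colen mu (pm j) = colen mu j" for j
  proof -
    have "colen mu (pm j) = card {z. z < d \<and> c_of mu T' z = pm j}" by (rule col_card[OF T' srt, symmetric])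
    also have "{z. z < d \<and> c_of mu T' z = pm j} = s ` {x. x < d \<and> c_of mu T x = j}"
    proof -
      have "{z. z < d \<and> c_of mu T' z = pm j} = {z. z < d \<and> c_of mu T (inv s z) = j}"
        using c' pminj by (auto simp: c_def inj_eq)
      also have "\<dots> = s ` {x. x < d \<and> c_of mu T x = j}"
        using s inv_in[OF s] p_in[OF s] by (auto simp: permutes_inverses image_iff) (metis permutes_inverses(1))
      finally show ?thesis .
    qed
    also have "card \<dots> = card {x. x < d \<and> c_of mu T x = j}"
      by (rule card_image) (rule inj_on_subset[OF permutes_inj[OF s]], simp)
    also have "\<dots> = colen mu j" by (rule col_card[OF T srt])
    finally show ?thesis .
  qed
  have rc: "(r z, c z) \<in> cells mu" if "z < d" for z
    using tab_pos(1)[OF T inv_in[OF s that]] by (simp add: r_def c_def r_of_def c_of_def)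
  have rc': "(r z, pm (c z)) \<in> cells mu" if "z < d" for z
    using rc[OF that] cells_iff[OF srt] colpres by simp
  define g where "g z = (if z < d then T' (r z, pm (c z)) else z)" for z
  have gin: "g ` {0..<d} \<subseteq> {0..<d}" using tab_val[OF T' rc'] by (auto simp: g_def)
  have ginj: "inj_on g {0..<d}"
  proof (rule inj_onI)
    fix z w assume z: "z \<in> {0..<d}" and w: "w \<in> {0..<d}" and e: "g z = g w"
    hence "T' (r z, pm (c z)) = T' (r w, pm (c w))" by (simp add: g_def)
    hence "(r z, pm (c z)) = (r w, pm (c w))" using inj_onD[OF tab_inj[OF T'] _ rc' rc'] z w by simp
    hence "pos mu T (inv s z) = pos mu T (inv s w)"
      using pminj by (simp add: r_def c_def r_of_def c_of_def inj_eq prod_eq_iff)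
    hence "T (pos mu T (inv s z)) = T (pos mu T (inv s w))" by simp
    hence "inv s z = inv s w" using tab_pos(2)[OF T] inv_in[OF s] z w by simp
    thus "z = w" using s by (metis permutes_inverses(1))
  qed
  have gp: "g permutes {0..<d}"
  proof (rule bij_imp_permutes)
    show "bij_betw g {0..<d} {0..<d}" using endo_inj_surj[OF _ gin ginj] ginj by (simp add: bij_betw_def)
    show "\<And>x. x \<notin> {0..<d} \<Longrightarrow> g x = x" by (simp add: g_def)
  qed
  have gpos: "pos mu T' (g z) = (r z, pm (c z))" if "z < d" for z
    using tab_pos2[OF T' rc'[OF that]] that by (simp add: g_def)
  have gc: "\<forall>z<d. c (g z) = c z"
  proof (intro allI impI)
    fix z assume z: "z < d"
    have "g z \<in> g ` {0..<d}" using z by simp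
    hence gz: "g z < d" using gin by auto
    have "pm (c (g z)) = c_of mu T' (g z)" using c'[OF gz] by simp
    also have "\<dots> = pm (c z)" using gpos[OF z] by (simp add: c_of_def)
    finally show "c (g z) = c z" using pminj by (simp add: inj_eq)
  qed
  have gr: "\<forall>z<d. r_of mu T' (g z) = r z" using gpos by (simp add: r_of_def)
  have cc: "\<forall>x<d. \<forall>y<d. c_of mu T' x = c_of mu T' y \<longleftrightarrow> c x = c y"
    using c' pminj by (simp add: inj_eq)
  show ?thesis
    using PT_transport[OF gp gc gr cc] gp unfolding r_def c_def by blast
qed

lemma sign_int_pm: "g permutes {0..<d} \<Longrightarrow> of_int (sign g) = (1::complex) \<or> of_int (sign g) = (-1::complex)"
  using sign_pm by (metis of_int_1 of_int_minus)

lemma triple_rel: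
  assumes T1: "T1 \<in> tableaux d mu1" and T2: "T2 \<in> tableaux d mu2" and T3: "T3 \<in> tableaux d mu3"
    and T1': "T1' \<in> tableaux d mu1" and T2': "T2' \<in> tableaux d mu2" and T3': "T3' \<in> tableaux d mu3"
    and s1: "sorted_wrt (\<ge>) mu1" and s2: "sorted_wrt (\<ge>) mu2" and s3: "sorted_wrt (\<ge>) mu3"
    and s: "s permutes {0..<d}"
    and p1: "p1 permutes {0..<first_part mu1}" and p2: "p2 permutes {0..<first_part mu2}"
    and p3: "p3 permutes {0..<first_part mu3}"
    and h1: "\<forall>x<d. c_of mu1 T1' (s x) = p1 (c_of mu1 T1 x)"
    and h2: "\<forall>x<d. c_of mu2 T2' (s x) = p2 (c_of mu2 T2 x)"
    and h3: "\<forall>x<d. c_of mu3 T3' (s x) = p3 (c_of mu3 T3 x)"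
  shows "\<exists>e. (e = 1 \<or> e = -1) \<and> Rey d (Pt d mu1 mu2 mu3 T1 T2 T3) = fscale e (Rey d (Pt d mu1 mu2 mu3 T1' T2' T3'))"
proof -
  obtain g1 where g1: "g1 permutes {0..<d}" and e1: "\<And>t. PT d (r_of mu1 T1 \<circ> inv s) (c_of mu1 T1 \<circ> inv s) t
            = of_int (sign g1) * PT d (r_of mu1 T1') (c_of mu1 T1') t"
    using one_k[OF T1 T1' s1 s p1 h1] by blast
  obtain g2 where g2: "g2 permutes {0..<d}" and e2: "\<And>t. PT d (r_of mu2 T2 \<circ> inv s) (c_of mu2 T2 \<circ> inv s) t
            = of_int (sign g2) * PT d (r_of mu2 T2') (c_of mu2 T2') t"
    using one_k[OF T2 T2' s2 s p2 h2] by blast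
  obtain g3 where g3: "g3 permutes {0..<d}" and e3: "\<And>t. PT d (r_of mu3 T3 \<circ> inv s) (c_of mu3 T3 \<circ> inv s) t
            = of_int (sign g3) * PT d (r_of mu3 T3') (c_of mu3 T3') t"
    using one_k[OF T3 T3' s3 s p3 h3] by blast
  define e :: complex where "e = of_int (sign g1) * of_int (sign g2) * of_int (sign g3)"
  have epm: "e = 1 \<or> e = -1" unfolding e_def using sign_int_pm[OF g1] sign_int_pm[OF g2] sign_int_pm[OF g3]
    by auto
  have "perm_act s (Pt d mu1 mu2 mu3 T1 T2 T3) = fscale e (Pt d mu1 mu2 mu3 T1' T2' T3')"
    by (auto simp: fun_eq_iff perm_act_def Pt_def fscale_def poly_PT T1 T2 T3 T1' T2' T3'
        PT_relabel[OF s] e1 e2 e3 e_def)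
  hence "Rey d (Pt d mu1 mu2 mu3 T1 T2 T3) = fscale e (Rey d (Pt d mu1 mu2 mu3 T1' T2' T3'))"
    using Rey_act[OF s] Rey_scale by metis
  thus ?thesis using epm by blast
qed


lemma degen_k:
  assumes T: "T \<in> tableaux d mu" and x: "x < d" and y: "y < d"
    and cxy: "c_of mu T x = c_of mu T y"
  shows "PT d (r_of mu T \<circ> transpose x y) (c_of mu T \<circ> transpose x y) t
     = of_int (sign (transpose x y)) * PT d (r_of mu T) (c_of mu T) t"
proof -
  let ?tau = "transpose x y"
  have tp: "?tau permutes {0..<d}" using x y by (simp add: permutes_swap_id)
  have ct: "c_of mu T (?tau z) = c_of mu T z" for z
    using cxy by (cases "z = x"; cases "z = y") auto
  show ?thesis
  proof (rule PT_transport[OF tp])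
    show "\<forall>z<d. (c_of mu T \<circ> ?tau) (?tau z) = (c_of mu T \<circ> ?tau) z" using ct by simp
    show "\<forall>z<d. r_of mu T (?tau z) = (r_of mu T \<circ> ?tau) z" by simp
    show "\<forall>z<d. \<forall>w<d. c_of mu T z = c_of mu T w \<longleftrightarrow> (c_of mu T \<circ> ?tau) z = (c_of mu T \<circ> ?tau) w"
      using ct by simp
  qed
qed

lemma degen:
  assumes T1: "T1 \<in> tableaux d mu1" and T2: "T2 \<in> tableaux d mu2" and T3: "T3 \<in> tableaux d mu3"
    and x: "x < d" and y: "y < d" and xy: "x \<noteq> y"
    and hxy: "h3 mu1 mu2 mu3 T1 T2 T3 x = h3 mu1 mu2 mu3 T1 T2 T3 y"
  shows "Rey d (Pt d mu1 mu2 mu3 T1 T2 T3) = 0"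
proof -
  let ?tau = "transpose x y"
  have tp: "?tau permutes {0..<d}" using x y by (simp add: permutes_swap_id)
  have sg: "sign ?tau = -1" using xy by (simp add: sign_swap_id)
  have c1: "c_of mu1 T1 x = c_of mu1 T1 y" and c2: "c_of mu2 T2 x = c_of mu2 T2 y"
    and c3: "c_of mu3 T3 x = c_of mu3 T3 y" using hxy by (auto simp: h3_def)
  have e1: "polytabloid d mu1 T1 (t \<circ> ?tau) = - polytabloid d mu1 T1 t" for t
    unfolding poly_PT[OF T1] PT_relabel[OF tp] inv_transpose_eq degen_k[OF T1 x y c1] sg by simp
  have e2: "polytabloid d mu2 T2 (t \<circ> ?tau) = - polytabloid d mu2 T2 t" for t
    unfolding poly_PT[OF T2] PT_relabel[OF tp] inv_transpose_eq degen_k[OF T2 x y c2] sg by simp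
  have e3: "polytabloid d mu3 T3 (t \<circ> ?tau) = - polytabloid d mu3 T3 t" for t
    unfolding poly_PT[OF T3] PT_relabel[OF tp] inv_transpose_eq degen_k[OF T3 x y c3] sg by simp
  have "perm_act ?tau (Pt d mu1 mu2 mu3 T1 T2 T3) = fscale (-1) (Pt d mu1 mu2 mu3 T1 T2 T3)"
  proof (rule ext)
    fix t :: tabtriple
    obtain t1 t2 t3 where t: "t = (t1, t2, t3)" by (cases t) auto
    show "perm_act ?tau (Pt d mu1 mu2 mu3 T1 T2 T3) t = fscale (-1) (Pt d mu1 mu2 mu3 T1 T2 T3) t"
      unfolding t perm_act_def Pt_def fscale_def by (simp add: e1 e2 e3)
  qed
  hence E: "Rey d (Pt d mu1 mu2 mu3 T1 T2 T3) = fscale (-1) (Rey d (Pt d mu1 mu2 mu3 T1 T2 T3))"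
    using Rey_act[OF tp] Rey_scale by metis
  show ?thesis
  proof
    fix t
    have "Rey d (Pt d mu1 mu2 mu3 T1 T2 T3) t = - Rey d (Pt d mu1 mu2 mu3 T1 T2 T3) t"
      using fun_cong[OF E, of t] by (simp add: fscale_def)
    thus "Rey d (Pt d mu1 mu2 mu3 T1 T2 T3) t = 0 t" by simp
  qed
qed


definition pmap :: "(nat \<Rightarrow> nat) \<Rightarrow> (nat \<Rightarrow> nat) \<Rightarrow> (nat \<Rightarrow> nat) \<Rightarrow> point \<Rightarrow> point" where
  "pmap p1 p2 p3 = (\<lambda>(a, b, c). (p1 a, p2 b, p3 c))"

lemma nondeg_rel:
  assumes P1: "is_partition d mu1" and P2: "is_partition d mu2" and P3: "is_partition d mu3"
    and T1: "T1 \<in> tableaux d mu1" and T2: "T2 \<in> tableaux d mu2" and T3: "T3 \<in> tableaux d mu3"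
    and T1': "T1' \<in> tableaux d mu1" and T2': "T2' \<in> tableaux d mu2" and T3': "T3' \<in> tableaux d mu3"
    and inj: "inj_on (h3 mu1 mu2 mu3 T1 T2 T3) {0..<d}"
    and inj': "inj_on (h3 mu1 mu2 mu3 T1' T2' T3') {0..<d}"
    and p1: "p1 permutes {0..<first_part mu1}" and p2: "p2 permutes {0..<first_part mu2}"
    and p3: "p3 permutes {0..<first_part mu3}"
    and HH: "h3 mu1 mu2 mu3 T1' T2' T3' ` {0..<d} = pmap p1 p2 p3 ` h3 mu1 mu2 mu3 T1 T2 T3 ` {0..<d}"
  shows "\<exists>e. (e = 1 \<or> e = -1) \<and> Rey d (Pt d mu1 mu2 mu3 T1 T2 T3) = fscale e (Rey d (Pt d mu1 mu2 mu3 T1' T2' T3'))"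
proof -
  let ?h = "h3 mu1 mu2 mu3 T1 T2 T3"
  let ?h' = "h3 mu1 mu2 mu3 T1' T2' T3'"
  have s1: "sorted_wrt (\<ge>) mu1" and s2: "sorted_wrt (\<ge>) mu2" and s3: "sorted_wrt (\<ge>) mu3"
    using P1 P2 P3 by (auto simp: is_partition_def)
  have pinj: "inj (pmap p1 p2 p3)"
  proof (rule injI)
    fix u v :: point assume e: "pmap p1 p2 p3 u = pmap p1 p2 p3 v"
    obtain a b c where u: "u = (a, b, c)" by (cases u) auto
    obtain a' b' c' where v: "v = (a', b', c')" by (cases v) auto
    have "p1 a = p1 a'" "p2 b = p2 b'" "p3 c = p3 c'" using e by (simp_all add: u v pmap_def)
    hence "a = a'" "b = b'" "c = c'"
      using permutes_inj[OF p1] permutes_inj[OF p2] permutes_inj[OF p3] by (simp_all add: inj_eq)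
    thus "u = v" by (simp add: u v)
  qed
  define s where "s x = (if x < d then the_inv_into {0..<d} ?h' (pmap p1 p2 p3 (?h x)) else x)" for x
  have mem: "pmap p1 p2 p3 (?h x) \<in> ?h' ` {0..<d}" if "x < d" for x
    using HH that by auto
  have hs: "?h' (s x) = pmap p1 p2 p3 (?h x)" if "x < d" for x
    using f_the_inv_into_f[OF inj' mem[OF that]] that by (simp add: s_def)
  have sin: "s x < d" if "x < d" for x
    using the_inv_into_into[OF inj' mem[OF that], of "{0..<d}"] that by (simp add: s_def)
  have sinj: "inj_on s {0..<d}"
  proof (rule inj_onI)
    fix x y assume x: "x \<in> {0..<d}" and y: "y \<in> {0..<d}" and e: "s x = s y"
    have "?h' (s x) = ?h' (s y)" by (simp only: e)
    moreover have "?h' (s x) = pmap p1 p2 p3 (?h x)" using hs x by simp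
    moreover have "?h' (s y) = pmap p1 p2 p3 (?h y)" using hs y by simp
    ultimately have "pmap p1 p2 p3 (?h x) = pmap p1 p2 p3 (?h y)" by simp
    hence "?h x = ?h y" using pinj by (simp add: inj_eq)
    thus "x = y" using inj_onD[OF inj] x y by blast
  qed
  have sp: "s permutes {0..<d}"
  proof (rule bij_imp_permutes)
    have "s ` {0..<d} \<subseteq> {0..<d}" using sin by auto
    thus "bij_betw s {0..<d} {0..<d}" using endo_inj_surj[OF _ _ sinj] sinj by (simp add: bij_betw_def)
    show "\<And>x. x \<notin> {0..<d} \<Longrightarrow> s x = x" by (simp add: s_def)
  qed
  have hh: "c_of mu1 T1' (s x) = p1 (c_of mu1 T1 x) \<and> c_of mu2 T2' (s x) = p2 (c_of mu2 T2 x)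
     \<and> c_of mu3 T3' (s x) = p3 (c_of mu3 T3 x)" if "x < d" for x
    using hs[OF that] by (simp add: h3_def pmap_def)
  have hh1: "\<forall>x<d. c_of mu1 T1' (s x) = p1 (c_of mu1 T1 x)" using hh by blast
  have hh2: "\<forall>x<d. c_of mu2 T2' (s x) = p2 (c_of mu2 T2 x)" using hh by blast
  have hh3: "\<forall>x<d. c_of mu3 T3' (s x) = p3 (c_of mu3 T3 x)" using hh by blast
  show ?thesis
    by (rule triple_rel[OF T1 T2 T3 T1' T2' T3' s1 s2 s3 sp p1 p2 p3 hh1 hh2 hh3])
qed

theorem mainTheorem8:
  fixes n d :: nat and lam1 lam2 lam3 :: "nat list"
  assumes "partition_le n d lam1" and "partition_le n d lam2" and "partition_le n d lam3"
  shows "kronecker lam1 lam2 lam3 \<le> num_designs lam1 lam2 lam3"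
proof -
  have P1: "is_partition d lam1" and P2: "is_partition d lam2" and P3: "is_partition d lam3"
    using assms unfolding partition_le_def by blast+
  have dsum: "sum_list lam1 = d" using P1 unfolding is_partition_def by blast
  define l1 where "l1 = first_part lam1"
  define l2 where "l2 = first_part lam2"
  define l3 where "l3 = first_part lam3"
  define Ob where "Ob = design_orbit l1 l2 l3 ` designs lam1 lam2 lam3"
  define good where "good = (\<lambda>(T1, T2, T3). T1 \<in> tableaux d lam1 \<and> T2 \<in> tableaux d lam2 \<and> T3 \<in> tableaux d lam3
      \<and> inj_on (h3 lam1 lam2 lam3 T1 T2 T3) {0..<d})"
  define Q where "Q ob T = (good T \<and> design_orbit l1 l2 l3
      (h3 lam1 lam2 lam3 (fst T) (fst (snd T)) (snd (snd T)) ` {0..<d}) = ob)" for ob T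
  define sel where "sel ob = (SOME T. Q ob T)" for ob
  define RG where "RG ob = Rey d (Pt d lam1 lam2 lam3 (fst (sel ob)) (fst (snd (sel ob))) (snd (snd (sel ob))))" for ob
  define G where "G = RG ` Ob"
  have finOb: "finite Ob"
  proof -
    have sub: "designs lam1 lam2 lam3 \<subseteq> Pow (box l1 l2 l3)" unfolding designs_def l1_def l2_def l3_def by blast
    have fb: "finite (box l1 l2 l3)" by (simp add: box_def)
    have "finite (designs lam1 lam2 lam3)" by (rule finite_subset[OF sub]) (simp add: fb)
    thus ?thesis unfolding Ob_def by (rule finite_imageI)
  qed
  have finG: "finite G" unfolding G_def by (rule finite_imageI[OF finOb])
  have cardG: "card G \<le> card Ob" unfolding G_def by (rule card_image_le[OF finOb])
  have A: "Rey d (Pt d lam1 lam2 lam3 T1 T2 T3) \<in> V.span G"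
    if T1: "T1 \<in> tableaux d lam1" and T2: "T2 \<in> tableaux d lam2" and T3: "T3 \<in> tableaux d lam3" for T1 T2 T3
  proof (cases "inj_on (h3 lam1 lam2 lam3 T1 T2 T3) {0..<d}")
    case False
    then obtain x y where x: "x \<in> {0..<d}" and y: "y \<in> {0..<d}" and xy: "x \<noteq> y"
      and hxy: "h3 lam1 lam2 lam3 T1 T2 T3 x = h3 lam1 lam2 lam3 T1 T2 T3 y"
      unfolding inj_on_def by blast
    have "x < d" "y < d" using x y by simp_all
    hence "Rey d (Pt d lam1 lam2 lam3 T1 T2 T3) = 0" using degen[OF T1 T2 T3 _ _ xy hxy] by blast
    thus ?thesis by (simp only: V.span_zero)
  next
    case True
    let ?H = "h3 lam1 lam2 lam3 T1 T2 T3 ` {0..<d}"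
    define ob where "ob = design_orbit l1 l2 l3 ?H"
    have Hd: "?H \<in> designs lam1 lam2 lam3" by (rule H_design[OF P1 P2 P3 T1 T2 T3 True])
    have obO: "ob \<in> Ob" unfolding Ob_def ob_def using Hd by (rule imageI)
    have ex: "Q ob (T1, T2, T3)"
      using T1 T2 T3 True by (simp add: Q_def good_def ob_def)
    obtain T1' T2' T3' where selo: "sel ob = (T1', T2', T3')" using prod_cases3 by blast
    have "Q ob (sel ob)"
      unfolding sel_def by (rule someI[of "Q ob", OF ex])
    hence Qs: "Q ob (T1', T2', T3')" by (simp only: selo)
    have T1': "T1' \<in> tableaux d lam1" and T2': "T2' \<in> tableaux d lam2" and T3': "T3' \<in> tableaux d lam3"
      and inj': "inj_on (h3 lam1 lam2 lam3 T1' T2' T3') {0..<d}"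
      and oeq: "design_orbit l1 l2 l3 (h3 lam1 lam2 lam3 T1' T2' T3' ` {0..<d}) = ob"
      using Qs by (simp_all add: Q_def good_def)
    have "h3 lam1 lam2 lam3 T1' T2' T3' ` {0..<d} \<in> design_orbit l1 l2 l3 (h3 lam1 lam2 lam3 T1' T2' T3' ` {0..<d})"
    proof -
      have "(\<lambda>(a, b, c). (id a, id b, id c)) ` (h3 lam1 lam2 lam3 T1' T2' T3' ` {0..<d})
          = h3 lam1 lam2 lam3 T1' T2' T3' ` {0..<d}"
        by (simp add: split_beta)
      hence "\<exists>p1 p2 p3. h3 lam1 lam2 lam3 T1' T2' T3' ` {0..<d} =
          (\<lambda>(a, b, c). (p1 a, p2 b, p3 c)) ` (h3 lam1 lam2 lam3 T1' T2' T3' ` {0..<d})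
          \<and> p1 permutes {0..<l1} \<and> p2 permutes {0..<l2} \<and> p3 permutes {0..<l3}"
        by (intro exI[of _ id]) (simp add: permutes_id)
      thus ?thesis unfolding design_orbit_def by blast
    qed
    hence "h3 lam1 lam2 lam3 T1' T2' T3' ` {0..<d} \<in> design_orbit l1 l2 l3 ?H"
      unfolding oeq ob_def .
    then obtain p1 p2 p3 where p1: "p1 permutes {0..<l1}" and p2: "p2 permutes {0..<l2}"
      and p3: "p3 permutes {0..<l3}"
      and HH: "h3 lam1 lam2 lam3 T1' T2' T3' ` {0..<d} = pmap p1 p2 p3 ` ?H"
      unfolding design_orbit_def pmap_def by blast
    obtain e where eq: "Rey d (Pt d lam1 lam2 lam3 T1 T2 T3) = fscale e (Rey d (Pt d lam1 lam2 lam3 T1' T2' T3'))"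
      using nondeg_rel[OF P1 P2 P3 T1 T2 T3 T1' T2' T3' True inj' p1[unfolded l1_def]
          p2[unfolded l2_def] p3[unfolded l3_def] HH] by blast
    have rg: "RG ob = Rey d (Pt d lam1 lam2 lam3 T1' T2' T3')" unfolding RG_def selo by simp
    have "RG ob \<in> G" unfolding G_def using obO by (rule imageI)
    hence "Rey d (Pt d lam1 lam2 lam3 T1' T2' T3') \<in> V.span G" unfolding rg by (rule V.span_base)
    hence "fscale e (Rey d (Pt d lam1 lam2 lam3 T1' T2' T3')) \<in> V.span G" by (rule V.span_scale)
    thus ?thesis unfolding eq .
  qed
  have B: "F \<in> V.span G" if F: "F \<in> invariants d lam1 lam2 lam3" for F
  proof -
    let ?B = "{Pt d lam1 lam2 lam3 T1 T2 T3 | T1 T2 T3.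
        T1 \<in> tableaux d lam1 \<and> T2 \<in> tableaux d lam2 \<and> T3 \<in> tableaux d lam3}"
    have Fs: "F \<in> V.span ?B"
      using F unfolding invariants_def specht_triple_def Pt_def by blast
    have sub: "V.subspace {F. Rey d F \<in> V.span G}"
    proof (rule V.subspaceI)
      show "0 \<in> {F. Rey d F \<in> V.span G}" by (simp add: Rey_zero V.span_zero)
      show "x + y \<in> {F. Rey d F \<in> V.span G}" if "x \<in> {F. Rey d F \<in> V.span G}" "y \<in> {F. Rey d F \<in> V.span G}" for x y
        using that by (simp add: Rey_add V.span_add)
      show "fscale c x \<in> {F. Rey d F \<in> V.span G}" if "x \<in> {F. Rey d F \<in> V.span G}" for c x
        using that by (simp add: Rey_scale V.span_scale)
    qed
    have "?B \<subseteq> {F. Rey d F \<in> V.span G}"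
    proof (rule subsetI)
      fix X assume "X \<in> ?B"
      then obtain T1 T2 T3 where X: "X = Pt d lam1 lam2 lam3 T1 T2 T3" and
        T1: "T1 \<in> tableaux d lam1" and T2: "T2 \<in> tableaux d lam2" and T3: "T3 \<in> tableaux d lam3" by blast
      show "X \<in> {F. Rey d F \<in> V.span G}" unfolding X using A[OF T1 T2 T3] by simp
    qed
    hence "V.span ?B \<subseteq> {F. Rey d F \<in> V.span G}" by (rule V.span_minimal[OF _ sub])
    hence R: "Rey d F \<in> V.span G" using Fs by blast
    have inv: "\<And>s. s permutes {0..<d} \<Longrightarrow> perm_act s F = F" using F unfolding invariants_def by blast
    have cp: "card {s. s permutes {0..<d}} = fact d" by (rule card_permutations) auto
    have RF: "Rey d F = fscale (of_nat (fact d)) F"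
    proof (rule ext)
      fix t
      have "Rey d F t = (\<Sum>s\<in>{s. s permutes {0..<d}}. F t)" unfolding Rey_def
        by (rule sum.cong) (simp_all add: inv)
      also have "\<dots> = of_nat (fact d) * F t" by (simp add: cp)
      finally show "Rey d F t = fscale (of_nat (fact d)) F t" by (simp add: fscale_def)
    qed
    have Feq: "F = fscale (1 / of_nat (fact d)) (Rey d F)"
      unfolding RF by (simp add: fscale_def fun_eq_iff)
    have "fscale (1 / of_nat (fact d)) (Rey d F) \<in> V.span G" by (rule V.span_scale[OF R])
    thus ?thesis by (subst Feq)
  qed
  have "kronecker lam1 lam2 lam3 = V.dim (invariants d lam1 lam2 lam3)"
    unfolding kronecker_def dsum ..
  also have "\<dots> \<le> card G" by (rule V.dim_le_card[OF _ finG]) (use B in blast)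
  also have "\<dots> \<le> card Ob" by (rule cardG)
  also have "\<dots> = num_designs lam1 lam2 lam3" unfolding num_designs_def Ob_def l1_def l2_def l3_def ..
  finally show ?thesis .
qed

end
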